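(* Let $n\ge 1$ and $s\geq 3$ be integers. There exists a sudoku array of type $\mathrm{SA}(s,n)$ if and only if there exist $s-2$ mutually orthogonal sudoku solutions of order $n^2$.
   Context: A sudoku solution of order $n^2$ is an $n^2\times n^2$ Latin square on $n^2$ symbols in which, in addition, each symbol appears exactly once in each of the $n^2$ canonical $n\times n$ subsquares (the subsquares formed by rows $an,\dots,an+n-1$ and columns $bn,\dots,bn+n-1$, $0\le a,b\le n-1$). Two Latin squares of the same order are orthogonal if, upon superimposition, each ordered pair of symbols appears exactly once; a family is mutually orthogonal if its members are pairwise orthogonal. A sudoku array of type $\mathrm{SA}(s,n)$ is a $2s\times n^4$ array with entries from an alphabet of size $n$, whose rows are partitioned into $s$ bands of two rows each and labeled $(i,j)$, $1\le i\le s$, $j\in\{1,2\}$ (row $(i,j)$ is the $j$-th row of the $i$-th band). A set $T$ of $4$ rows is top-justified if whenever row $(i,2)\in T$ then also $(i,1)\in T$; it is sudoku top-justified if it is top-justified and moreover, for every $i\ge 3$, $(i,1)\in T$ implies $(i,2)\in T$. The requirement is: for every sudoku top-justified set $T$ of $4$ rows, the $4\times n^4$ subarray formed by the rows in $T$ contains each $4$-tuple over the alphabet exactly once as a column. *)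

theory Defs
  imports Main
begin

definition latin_square :: "nat \<Rightarrow> (nat \<Rightarrow> nat \<Rightarrow> nat) \<Rightarrow> bool" where
  "latin_square m L \<longleftrightarrow>
     (\<forall>i<m. bij_betw (\<lambda>j. L i j) {..<m} {..<m}) \<and>
     (\<forall>j<m. bij_betw (\<lambda>i. L i j) {..<m} {..<m})"

definition sudoku_solution :: "nat \<Rightarrow> (nat \<Rightarrow> nat \<Rightarrow> nat) \<Rightarrow> bool" where
  "sudoku_solution n L \<longleftrightarrow>
     latin_square (n^2) L \<and>
     (\<forall>a<n. \<forall>b<n. bij_betw (\<lambda>(x, y). L (a * n + x) (b * n + y))
                              ({..<n} \<times> {..<n}) {..<n^2})"

definition orthogonal :: "nat \<Rightarrow> (nat \<Rightarrow> nat \<Rightarrow> nat) \<Rightarrow> (nat \<Rightarrow> nat \<Rightarrow> nat) \<Rightarrow> bool" where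
  "orthogonal m L1 L2 \<longleftrightarrow>
     bij_betw (\<lambda>(i, j). (L1 i j, L2 i j)) ({..<m} \<times> {..<m}) ({..<m} \<times> {..<m})"

definition mutually_orthogonal_sudokus :: "nat \<Rightarrow> nat \<Rightarrow> (nat \<Rightarrow> nat \<Rightarrow> nat \<Rightarrow> nat) \<Rightarrow> bool" where
  "mutually_orthogonal_sudokus k n Ls \<longleftrightarrow>
     (\<forall>t<k. sudoku_solution n (Ls t)) \<and>
     (\<forall>t<k. \<forall>u<k. t \<noteq> u \<longrightarrow> orthogonal (n^2) (Ls t) (Ls u))"

definition sa_rows :: "nat \<Rightarrow> (nat \<times> nat) set" where
  "sa_rows s = {1..s} \<times> {1, 2}"

definition sudoku_top_justified :: "nat \<Rightarrow> (nat \<times> nat) set \<Rightarrow> bool" where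
  "sudoku_top_justified s T \<longleftrightarrow>
     T \<subseteq> sa_rows s \<and> card T = 4 \<and>
     (\<forall>i. (i, 2) \<in> T \<longrightarrow> (i, 1) \<in> T) \<and>
     (\<forall>i\<ge>3. (i, 1) \<in> T \<longrightarrow> (i, 2) \<in> T)"

definition sudoku_array :: "nat \<Rightarrow> nat \<Rightarrow> (nat \<times> nat \<Rightarrow> nat \<Rightarrow> nat) \<Rightarrow> bool" where
  "sudoku_array s n A \<longleftrightarrow>
     (\<forall>r\<in>sa_rows s. \<forall>c<n^4. A r c < n) \<and>
     (\<forall>T. sudoku_top_justified s T \<longrightarrow>
        (\<forall>f. (\<forall>r\<in>T. f r < n) \<longrightarrow> (\<exists>!c. c < n^4 \<and> (\<forall>r\<in>T. A r c = f r))))"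

end

theory Submission
  imports Defs "HOL-Library.FuncSet"
begin

lemma enc_less: "(a::nat) < n \<Longrightarrow> b < n \<Longrightarrow> a * n + b < n^2"
proof -
  assume a: "a < n" and b: "b < n"
  have "a * n + b < a * n + n" using b by simp
  also have "\<dots> = (a+1) * n" by simp
  also have "\<dots> \<le> n * n" using a by (intro mult_le_mono1) simp
  finally show ?thesis by (simp add: power2_eq_square)
qed

lemma dec_div: "(b::nat) < n \<Longrightarrow> (a * n + b) div n = a"
  by simp

lemma dec_mod: "(b::nat) < n \<Longrightarrow> (a * n + b) mod n = b"
  by simp

lemma div_less_n: "(v::nat) < n^2 \<Longrightarrow> v div n < n"
  by (simp add: less_mult_imp_div_less power2_eq_square)

lemma mod_less_n: "(n::nat) \<ge> 1 \<Longrightarrow> v mod n < n"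
  by simp

lemma bij_from_surj:
  assumes "finite X" "card X = card Y" "\<forall>x\<in>X. f x \<in> Y" "\<forall>y\<in>Y. \<exists>x\<in>X. f x = y"
  shows "bij_betw f X Y"
proof -
  have img: "f ` X = Y" using assms(3,4) by (auto simp: image_iff)
  have "inj_on f X" using assms(1,2) img by (intro eq_card_imp_inj_on) simp_all
  thus ?thesis using img by (simp add: bij_betw_def)
qed

lemma exists_imp_unique:
  fixes A :: "nat \<times> nat \<Rightarrow> nat \<Rightarrow> nat"
  assumes fin: "finite T" and card: "card T = 4"
    and rng: "\<forall>r\<in>T. \<forall>c<n^4. A r c < n"
    and ex: "\<forall>f. (\<forall>r\<in>T. f r < n) \<longrightarrow> (\<exists>c<n^4. \<forall>r\<in>T. A r c = f r)"
  shows "\<forall>f. (\<forall>r\<in>T. f r < n) \<longrightarrow> (\<exists>!c. c < n^4 \<and> (\<forall>r\<in>T. A r c = f r))"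
proof -
  define \<phi> where "\<phi> c = restrict (\<lambda>r. A r c) T" for c
  have img: "\<phi> ` {..<n^4} = PiE T (\<lambda>_. {..<n})"
  proof
    show "\<phi> ` {..<n^4} \<subseteq> PiE T (\<lambda>_. {..<n})" using rng by (auto simp: \<phi>_def)
    show "PiE T (\<lambda>_. {..<n}) \<subseteq> \<phi> ` {..<n^4}"
    proof
      fix g assume g: "g \<in> PiE T (\<lambda>_. {..<n})"
      then have "\<forall>r\<in>T. g r < n" by auto
      with ex obtain c where c: "c < n^4" "\<forall>r\<in>T. A r c = g r" by blast
      have "\<phi> c = g"
      proof
        fix r show "\<phi> c r = g r"
          using g c by (cases r; cases "r \<in> T") (auto simp: \<phi>_def PiE_def extensional_def)
      qed
      thus "g \<in> \<phi> ` {..<n^4}" using c by blast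
    qed
  qed
  have "card (PiE T (\<lambda>_. {..<n})) = n^4" using fin card by (simp add: card_PiE)
  hence inj: "inj_on \<phi> {..<n^4}" by (intro eq_card_imp_inj_on) (simp_all add: img)
  show ?thesis
  proof (intro allI impI)
    fix f assume f: "\<forall>r\<in>T. f r < n"
    with ex obtain c where c: "c < n^4" "\<forall>r\<in>T. A r c = f r" by blast
    show "\<exists>!c. c < n^4 \<and> (\<forall>r\<in>T. A r c = f r)"
    proof (rule ex1I[of _ c])
      show "c < n^4 \<and> (\<forall>r\<in>T. A r c = f r)" using c by blast
    next
      fix c' assume c': "c' < n^4 \<and> (\<forall>r\<in>T. A r c' = f r)"
      have "\<phi> c' = \<phi> c" unfolding \<phi>_def using c c' by (intro restrict_ext) simp
      thus "c' = c" using inj c c' by (auto dest: inj_onD)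
    qed
  qed
qed

lemma tj0: "s \<ge> 2 \<Longrightarrow> sudoku_top_justified s {(1,1),(1,2),(2,1),(2,2)}"
  by (auto simp: sudoku_top_justified_def sa_rows_def)
lemma tj1: "3 \<le> i \<Longrightarrow> i \<le> s \<Longrightarrow> sudoku_top_justified s {(1,1),(1,2),(i,1),(i,2)}"
  by (auto simp: sudoku_top_justified_def sa_rows_def)
lemma tj2: "3 \<le> i \<Longrightarrow> i \<le> s \<Longrightarrow> sudoku_top_justified s {(2,1),(2,2),(i,1),(i,2)}"
  by (auto simp: sudoku_top_justified_def sa_rows_def)
lemma tj3: "3 \<le> i \<Longrightarrow> i \<le> s \<Longrightarrow> sudoku_top_justified s {(1,1),(2,1),(i,1),(i,2)}"
  by (auto simp: sudoku_top_justified_def sa_rows_def)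
lemma tj4: "3 \<le> i \<Longrightarrow> i \<le> s \<Longrightarrow> 3 \<le> j \<Longrightarrow> j \<le> s \<Longrightarrow> i \<noteq> j \<Longrightarrow>
   sudoku_top_justified s {(i,1),(i,2),(j,1),(j,2)}"
  by (auto simp: sudoku_top_justified_def sa_rows_def)

lemma Tchar:
  assumes tj: "sudoku_top_justified s T"
  shows "T = {(1,1),(1,2),(2,1),(2,2)} \<or>
    (\<exists>i. 3 \<le> i \<and> i \<le> s \<and> (T = {(1,1),(1,2),(i,1),(i,2)} \<or> T = {(2,1),(2,2),(i,1),(i,2)}
        \<or> T = {(1,1),(2,1),(i,1),(i,2)})) \<or>
    (\<exists>i j. 3 \<le> i \<and> i \<le> s \<and> 3 \<le> j \<and> j \<le> s \<and> i \<noteq> j \<and> T = {(i,1),(i,2),(j,1),(j,2)})"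
proof -
  define B where "B = {i. 3 \<le> i \<and> (i,1) \<in> T}"
  define F where "F = T \<inter> {(1,1),(1,2),(2,1),(2,2)}"
  have sub: "T \<subseteq> sa_rows s" and c4: "card T = 4"
    and j2: "\<forall>i. (i, 2) \<in> T \<longrightarrow> (i, 1) \<in> T" and j3: "\<forall>i\<ge>3. (i, 1) \<in> T \<longrightarrow> (i, 2) \<in> T"
    using tj by (auto simp: sudoku_top_justified_def)
  have TFB: "T = F \<union> B \<times> {1,2}"
  proof
    show "T \<subseteq> F \<union> B \<times> {1,2}"
    proof
      fix x assume x: "x \<in> T"
      obtain i j where ij: "x = (i,j)" by (cases x)
      have "1 \<le> i" "j = 1 \<or> j = 2" using sub x ij by (auto simp: sa_rows_def)
      show "x \<in> F \<union> B \<times> {1,2}"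
      proof (cases "i \<le> 2")
        case True
        then have "i = 1 \<or> i = 2" using \<open>1 \<le> i\<close> by linarith
        then show ?thesis using x ij \<open>j = 1 \<or> j = 2\<close> by (auto simp: F_def)
      next
        case False
        then show ?thesis using x ij \<open>j = 1 \<or> j = 2\<close> j2 by (auto simp: B_def)
      qed
    qed
    show "F \<union> B \<times> {1,2} \<subseteq> T" using j3 by (auto simp: F_def B_def)
  qed
  have Bs: "B \<subseteq> {3..s}" using sub by (auto simp: B_def sa_rows_def)
  have finB: "finite B" using Bs finite_subset by blast
  have disj: "F \<inter> B \<times> {1,2} = {}" by (auto simp: F_def B_def)
  have cardT: "card T = card F + 2 * card B"
  proof -
    have "finite F" by (simp add: F_def)
    then have "card (F \<union> B \<times> {1,2}) = card F + card (B \<times> {1::nat,2})"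
      using disj finB by (intro card_Un_disjoint) auto
    also have "card (B \<times> {1::nat,2}) = 2 * card B" by (simp add: card_cartesian_product)
    finally show ?thesis using TFB by simp
  qed
  have Feq: "F = (if (1,1) \<in> T then {(1,1)} else {}) \<union> (if (1,2) \<in> T then {(1,2)} else {})
     \<union> (if (2,1) \<in> T then {(2,1)} else {}) \<union> (if (2,2) \<in> T then {(2,2)} else {})"
    by (auto simp: F_def split: if_splits)
  have m12: "(1,2) \<in> T \<Longrightarrow> (1,1) \<in> T" and m22: "(2,2) \<in> T \<Longrightarrow> (2,1) \<in> T"
    using j2 by auto
  have "card B = 0 \<or> card B = 1 \<or> card B = 2" using cardT c4 by linarith
  moreover {
    assume "card B = 0"
    then have "B = {}" using finB by simp
    then have TF: "T = F" using TFB by simp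
    have cF: "card F = 4" using TF c4 by simp
    have "F = {(1,1),(1,2),(2,1),(2,2)}"
      using Feq cF by (cases "(1,1) \<in> T"; cases "(1,2) \<in> T"; cases "(2,1) \<in> T"; cases "(2,2) \<in> T") (simp_all add: insert_commute)
    then have ?thesis using TF by simp
  }
  moreover {
    assume "card B = 1"
    then obtain i where Bi: "B = {i}" by (auto simp: card_1_singleton_iff)
    then have i: "3 \<le> i" "i \<le> s" using Bs by auto
    have TT: "T = F \<union> {(i,1),(i,2)}" using TFB Bi by auto
    have cF: "card F = 2" using cardT c4 \<open>card B = 1\<close> by simp
    have "F = {(1,1),(1,2)} \<or> F = {(2,1),(2,2)} \<or> F = {(1,1),(2,1)}"
      using Feq cF m12 m22 by (cases "(1,1) \<in> T"; cases "(1,2) \<in> T"; cases "(2,1) \<in> T"; cases "(2,2) \<in> T") (simp_all add: insert_commute)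
    then have "T = {(1,1),(1,2),(i,1),(i,2)} \<or> T = {(2,1),(2,2),(i,1),(i,2)} \<or> T = {(1,1),(2,1),(i,1),(i,2)}"
      using TT by auto
    then have ?thesis using i by blast
  }
  moreover {
    assume "card B = 2"
    then obtain i j where Bi: "B = {i,j}" "i \<noteq> j" by (auto simp: card_2_iff)
    then have i: "3 \<le> i" "i \<le> s" "3 \<le> j" "j \<le> s" using Bs by auto
    have TT: "T = F \<union> {(i,1),(i,2),(j,1),(j,2)}" using TFB Bi by auto
    have "card F = 0" using cardT c4 \<open>card B = 2\<close> by simp
    then have "F = {}" by (simp add: F_def)
    then have ?thesis using TT i Bi by auto
  }
  ultimately show ?thesis by blast
qed


lemma sa_imp_mos:
  assumes n: "n \<ge> 1" and s3: "s \<ge> 3" and sa: "sudoku_array s n A"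
  shows "\<exists>Ls. mutually_orthogonal_sudokus (s - 2) n Ls"
proof -
  have rng: "\<And>r c. r \<in> sa_rows s \<Longrightarrow> c < n^4 \<Longrightarrow> A r c < n"
    using sa by (auto simp: sudoku_array_def)
  have ex4: "\<exists>k<n^4. A r1 k = a \<and> A r2 k = b \<and> A r3 k = c \<and> A r4 k = d"
    if T: "sudoku_top_justified s {r1,r2,r3,r4}" and dst: "distinct [r1,r2,r3,r4]"
      and "a < n" "b < n" "c < n" "d < n" for r1 r2 r3 r4 a b c d
  proof -
    define f where "f r = (if r = r1 then a else if r = r2 then b else if r = r3 then c else d)" for r
    have "\<forall>r\<in>{r1,r2,r3,r4}. f r < n" using that by (auto simp: f_def)
    then have "\<exists>!k. k < n^4 \<and> (\<forall>r\<in>{r1,r2,r3,r4}. A r k = f r)"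
      using sa T unfolding sudoku_array_def by blast
    then obtain k where "k < n^4" "\<forall>r\<in>{r1,r2,r3,r4}. A r k = f r" by blast
    then show ?thesis using dst by (intro exI[of _ k]) (auto simp: f_def)
  qed
  define P where "P i k = A (i,1) k * n + A (i,2) k" for i k
  have Prng: "P i k < n^2" if "1 \<le> i" "i \<le> s" "k < n^4" for i k
    unfolding P_def using that by (intro enc_less rng) (auto simp: sa_rows_def)
  have P1: "A (i,1) k = P i k div n" "A (i,2) k = P i k mod n" if "1 \<le> i" "i \<le> s" "k < n^4" for i k
    unfolding P_def using that rng[of "(i,2)" k] by (auto simp: sa_rows_def)
  have Pdec: "P i k = v" if "A (i,1) k = v div n" "A (i,2) k = v mod n" for i k v
    unfolding P_def using that by simp
  have dn: "v div n < n" "v mod n < n" if "v < n^2" for v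
    using that n by (auto simp: div_less_n)
  have T0: "sudoku_top_justified s {(1,1),(1,2),(2,1),(2,2)}" using s3 by (intro tj0) simp
  define col where "col R C = (SOME k. k < n^4 \<and> P 1 k = R \<and> P 2 k = C)" for R C
  have col_spec: "col R C < n^4 \<and> P 1 (col R C) = R \<and> P 2 (col R C) = C"
    if RC: "R < n^2" "C < n^2" for R C
  proof -
    obtain k where k: "k < n^4" "A (1,1) k = R div n" "A (1,2) k = R mod n"
      "A (2,1) k = C div n" "A (2,2) k = C mod n"
    proof -
      have D: "distinct [(1::nat,1::nat),(1,2),(2,1),(2,2)]" by simp
      show ?thesis using ex4[OF T0 D dn(1)[OF RC(1)] dn(2)[OF RC(1)] dn(1)[OF RC(2)] dn(2)[OF RC(2)]] that by blast
    qed
    then have "k < n^4 \<and> P 1 k = R \<and> P 2 k = C" using Pdec by blast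
    then show ?thesis unfolding col_def by (rule someI)
  qed
  have col_P: "col (P 1 k) (P 2 k) = k" if k: "k < n^4" for k
  proof -
    have Pr: "P 1 k < n^2" "P 2 k < n^2" using k s3 by (auto intro!: Prng)
    define k' where "k' = col (P 1 k) (P 2 k)"
    have k': "k' < n^4" "P 1 k' = P 1 k" "P 2 k' = P 2 k" using col_spec[OF Pr] k'_def by auto
    have eq: "\<forall>r\<in>{(1,1),(1,2),(2,1),(2,2)}. A r k' = A r k"
      using P1[of 1 k] P1[of 1 k'] P1[of 2 k] P1[of 2 k'] k k' s3 by auto
    have "\<forall>r\<in>{(1,1),(1,2),(2,1),(2,2)}. A r k < n" using k s3 by (auto intro!: rng simp: sa_rows_def)
    moreover have "\<forall>f. (\<forall>r\<in>{(1,1),(1,2),(2,1),(2,2)}. f r < n) \<longrightarrow>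
        (\<exists>!c. c < n^4 \<and> (\<forall>r\<in>{(1,1),(1,2),(2,1),(2,2)}. A r c = f r))"
      using sa T0 unfolding sudoku_array_def by blast
    ultimately have "\<exists>!c. c < n^4 \<and> (\<forall>r\<in>{(1,1),(1,2),(2,1),(2,2)}. A r c = A r k)"
      by (rule mp[OF spec[where x="\<lambda>r. A r k"], rotated])
    then show ?thesis using eq k k' unfolding k'_def by blast
  qed
  define Ls where "Ls t R C = P (t+3) (col R C)" for t R C
  have Lsrng: "Ls t R C < n^2" if "t < s - 2" "R < n^2" "C < n^2" for t R C
    unfolding Ls_def using that col_spec[of R C] by (intro Prng) auto
  have sqcard: "card ({..<n::nat} \<times> {..<n}) = n^2" by (simp add: card_cartesian_product power2_eq_square)
  have rows: "bij_betw (\<lambda>C. Ls t R C) {..<n^2} {..<n^2}" if t: "t < s - 2" and R: "R < n^2" for t R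
  proof (rule bij_from_surj)
    show "\<forall>x\<in>{..<n^2}. Ls t R x \<in> {..<n^2}" using Lsrng t R by auto
    show "\<forall>v\<in>{..<n^2}. \<exists>x\<in>{..<n^2}. Ls t R x = v"
    proof
      fix v assume v: "v \<in> {..<n^2}"
      obtain k where k: "k < n^4" "A (1,1) k = R div n" "A (1,2) k = R mod n"
        "A (t+3,1) k = v div n" "A (t+3,2) k = v mod n"
      proof -
        have T: "sudoku_top_justified s {(1,1),(1,2),(t+3,1),(t+3,2)}" using t by (intro tj1) auto
        have D: "distinct [(1::nat,1::nat),(1,2),(t+3,1),(t+3,2)]" by simp
        have v': "v < n^2" using v by simp
        show ?thesis using ex4[OF T D dn(1)[OF R] dn(2)[OF R] dn(1)[OF v'] dn(2)[OF v']] that by blast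
      qed
      have "P 1 k = R" "P (t+3) k = v" using Pdec k by blast+
      moreover have "P 2 k < n^2" using k s3 by (intro Prng) auto
      ultimately show "\<exists>x\<in>{..<n^2}. Ls t R x = v" using col_P[OF k(1)]
        by (intro bexI[of _ "P 2 k"]) (auto simp: Ls_def)
    qed
  qed simp_all
  have cols: "bij_betw (\<lambda>R. Ls t R C) {..<n^2} {..<n^2}" if t: "t < s - 2" and C: "C < n^2" for t C
  proof (rule bij_from_surj)
    show "\<forall>x\<in>{..<n^2}. Ls t x C \<in> {..<n^2}" using Lsrng t C by auto
    show "\<forall>v\<in>{..<n^2}. \<exists>x\<in>{..<n^2}. Ls t x C = v"
    proof
      fix v assume v: "v \<in> {..<n^2}"
      obtain k where k: "k < n^4" "A (2,1) k = C div n" "A (2,2) k = C mod n"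
        "A (t+3,1) k = v div n" "A (t+3,2) k = v mod n"
      proof -
        have T: "sudoku_top_justified s {(2,1),(2,2),(t+3,1),(t+3,2)}" using t by (intro tj2) auto
        have D: "distinct [(2::nat,1::nat),(2,2),(t+3,1),(t+3,2)]" by simp
        have v': "v < n^2" using v by simp
        show ?thesis using ex4[OF T D dn(1)[OF C] dn(2)[OF C] dn(1)[OF v'] dn(2)[OF v']] that by blast
      qed
      have "P 2 k = C" "P (t+3) k = v" using Pdec k by blast+
      moreover have "P 1 k < n^2" using k s3 by (intro Prng) auto
      ultimately show "\<exists>x\<in>{..<n^2}. Ls t x C = v" using col_P[OF k(1)]
        by (intro bexI[of _ "P 1 k"]) (auto simp: Ls_def)
    qed
  qed simp_all
  have boxes: "bij_betw (\<lambda>(x, y). Ls t (a * n + x) (b * n + y)) ({..<n} \<times> {..<n}) {..<n^2}"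
    if t: "t < s - 2" and a: "a < n" and b: "b < n" for t a b
  proof (rule bij_from_surj)
    show "\<forall>x\<in>{..<n} \<times> {..<n}. (\<lambda>(x, y). Ls t (a * n + x) (b * n + y)) x \<in> {..<n^2}"
      using Lsrng t a b enc_less by auto
    show "\<forall>v\<in>{..<n^2}. \<exists>x\<in>{..<n} \<times> {..<n}. (\<lambda>(x, y). Ls t (a * n + x) (b * n + y)) x = v"
    proof
      fix v assume v: "v \<in> {..<n^2}"
      obtain k where k: "k < n^4" "A (1,1) k = a" "A (2,1) k = b"
        "A (t+3,1) k = v div n" "A (t+3,2) k = v mod n"
      proof -
        have T: "sudoku_top_justified s {(1,1),(2,1),(t+3,1),(t+3,2)}" using t by (intro tj3) auto
        have D: "distinct [(1::nat,1::nat),(2,1),(t+3,1),(t+3,2)]" by simp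
        have v': "v < n^2" using v by simp
        show ?thesis using ex4[OF T D a b dn(1)[OF v'] dn(2)[OF v']] that by blast
      qed
      have "P (t+3) k = v" using Pdec k by blast
      moreover have "P 1 k = a * n + A (1,2) k" "P 2 k = b * n + A (2,2) k"
        using k by (simp_all add: P_def)
      moreover have "A (1,2) k < n" "A (2,2) k < n" using k s3 by (auto intro!: rng simp: sa_rows_def)
      ultimately show "\<exists>x\<in>{..<n} \<times> {..<n}. (\<lambda>(x, y). Ls t (a * n + x) (b * n + y)) x = v"
        using col_P[OF k(1)]
        by (intro bexI[of _ "(A (1,2) k, A (2,2) k)"]) (auto simp: Ls_def)
    qed
  qed (simp_all add: sqcard)
  have orth: "orthogonal (n^2) (Ls t) (Ls u)" if t: "t < s - 2" and u: "u < s - 2" and tu: "t \<noteq> u" for t u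
    unfolding orthogonal_def
  proof (rule bij_from_surj)
    show "\<forall>x\<in>{..<n^2} \<times> {..<n^2}. (\<lambda>(i, j). (Ls t i j, Ls u i j)) x \<in> {..<n^2} \<times> {..<n^2}"
      using Lsrng t u by auto
    show "\<forall>y\<in>{..<n^2} \<times> {..<n^2}. \<exists>x\<in>{..<n^2} \<times> {..<n^2}. (\<lambda>(i, j). (Ls t i j, Ls u i j)) x = y"
    proof
      fix y assume y: "y \<in> {..<n^2} \<times> {..<n^2}"
      obtain v w where vw: "y = (v,w)" "v < n^2" "w < n^2" using y by auto
      obtain k where k: "k < n^4" "A (t+3,1) k = v div n" "A (t+3,2) k = v mod n"
        "A (u+3,1) k = w div n" "A (u+3,2) k = w mod n"
      proof -
        have T: "sudoku_top_justified s {(t+3,1),(t+3,2),(u+3,1),(u+3,2)}" using t u tu by (intro tj4) auto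
        have D: "distinct [(t+3,1::nat),(t+3,2),(u+3,1),(u+3,2)]" using tu by simp
        show ?thesis using ex4[OF T D dn(1)[OF vw(2)] dn(2)[OF vw(2)] dn(1)[OF vw(3)] dn(2)[OF vw(3)]] that by blast
      qed
      have "P (t+3) k = v" "P (u+3) k = w" using Pdec k by blast+
      moreover have "P 1 k < n^2" "P 2 k < n^2" using k s3 by (auto intro!: Prng)
      ultimately show "\<exists>x\<in>{..<n^2} \<times> {..<n^2}. (\<lambda>(i, j). (Ls t i j, Ls u i j)) x = y"
        using col_P[OF k(1)] vw
        by (intro bexI[of _ "(P 1 k, P 2 k)"]) (auto simp: Ls_def)
    qed
  qed (simp_all add: card_cartesian_product)
  have "mutually_orthogonal_sudokus (s - 2) n Ls"
    unfolding mutually_orthogonal_sudokus_def sudoku_solution_def latin_square_def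
    using rows cols boxes orth by blast
  then show ?thesis by blast
qed


lemma bij_surjD: "bij_betw h X Y \<Longrightarrow> y \<in> Y \<Longrightarrow> \<exists>x\<in>X. h x = y"
  by (auto simp: bij_betw_def)

lemma enc_less2: "(a::nat) < m \<Longrightarrow> b < m \<Longrightarrow> a * m + b < m * m"
  using enc_less[of a m b] by (simp add: power2_eq_square)

lemma mos_imp_sa:
  assumes n: "n \<ge> 1" and s3: "s \<ge> 3" and M: "mutually_orthogonal_sudokus (s - 2) n Ls"
  shows "\<exists>A. sudoku_array s n A"
proof -
  have sol: "sudoku_solution n (Ls t)" if "t < s - 2" for t
    using M that by (auto simp: mutually_orthogonal_sudokus_def)
  have orth: "orthogonal (n^2) (Ls t) (Ls u)" if "t < s - 2" "u < s - 2" "t \<noteq> u" for t u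
    using M that by (auto simp: mutually_orthogonal_sudokus_def)
  have rowb: "bij_betw (\<lambda>C. Ls t R C) {..<n^2} {..<n^2}" if "t < s - 2" "R < n^2" for t R
    using sol[OF that(1)] that(2) by (auto simp: sudoku_solution_def latin_square_def)
  have colb: "bij_betw (\<lambda>R. Ls t R C) {..<n^2} {..<n^2}" if "t < s - 2" "C < n^2" for t C
    using sol[OF that(1)] that(2) by (auto simp: sudoku_solution_def latin_square_def)
  have boxb: "bij_betw (\<lambda>(x, y). Ls t (a * n + x) (b * n + y)) ({..<n} \<times> {..<n}) {..<n^2}"
    if "t < s - 2" "a < n" "b < n" for t a b
    using sol[OF that(1)] that(2,3) by (auto simp: sudoku_solution_def)
  have Lrng: "Ls t R C < n^2" if "t < s - 2" "R < n^2" "C < n^2" for t R C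
    using bij_betw_apply[OF rowb[OF that(1,2)]] that(3) by simp
  define cv where "cv i R C = (if i = 1 then R else if i = (2::nat) then C else Ls (i-3) R C)" for i R C
  define g where "g (r::nat\<times>nat) R C = (if snd r = 1 then cv (fst r) R C div n else cv (fst r) R C mod n)" for r R C
  define A where "A r k = g r (k div n^2) (k mod n^2)" for r k
  have n2: "n^2 > 0" using n by simp
  have n4: "(n::nat)^4 = n^2 * n^2" by (simp add: power_mult_distrib flip: power_add)
  have cvr: "cv i R C < n^2" if "1 \<le> i" "i \<le> s" "R < n^2" "C < n^2" for i R C
    using that Lrng[of "i-3" R C] by (auto simp: cv_def)
  have rng: "A r k < n" if "r \<in> sa_rows s" "k < n^4" for r k
  proof -
    have "k < n^2 * n^2" using that(2) unfolding n4 .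
    then have "k div n^2 < n^2" by (rule less_mult_imp_div_less)
    moreover have "k mod n^2 < n^2" using n2 by (rule mod_less_divisor)
    moreover have "1 \<le> fst r" "fst r \<le> s" using that(1) by (auto simp: sa_rows_def)
    ultimately have X: "cv (fst r) (k div n^2) (k mod n^2) < n^2" by (intro cvr)
    have "A r k = (if snd r = 1 then cv (fst r) (k div n^2) (k mod n^2) div n
                   else cv (fst r) (k div n^2) (k mod n^2) mod n)"
      by (simp only: A_def g_def)
    then show ?thesis using n div_less_n[OF X] by simp
  qed
  have cell: "\<exists>k<n^4. \<forall>r\<in>T. A r k = f r"
    if "R < n^2" "C < n^2" "\<forall>r\<in>T. g r R C = f r" for R C T f
  proof -
    have k: "R * n^2 + C < n^4" unfolding n4 using enc_less2[OF that(1,2)] .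
    have "(R * n^2 + C) div n^2 = R" "(R * n^2 + C) mod n^2 = C" using that(2) n2 by simp_all
    then show ?thesis using k that(3) by (intro exI[of _ "R * n^2 + C"]) (auto simp: A_def)
  qed
  have dd: "(a * n + b) div n = a" "(a * n + b) mod n = b" if "b < n" for a b :: nat
    using that by simp_all
  have encl: "a * n + b < n^2" if "a < n" "b < n" for a b using enc_less that by blast
  have exT: "\<exists>k<n^4. \<forall>r\<in>T. A r k = f r"
    if T: "sudoku_top_justified s T" and f: "\<forall>r\<in>T. f r < n" for T f
  proof -
    note cases = Tchar[OF T]
    have c0: ?thesis if T0: "T = {(1,1),(1,2),(2,1),(2,2)}"
    proof -
      have fb: "f (1,1) < n" "f (1,2) < n" "f (2,1) < n" "f (2,2) < n" using f T0 by auto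
      show ?thesis
        by (rule cell[OF encl[OF fb(1,2)] encl[OF fb(3,4)]]) (use fb in \<open>simp add: T0 g_def cv_def dd\<close>)
    qed
    have c1: ?thesis if i: "3 \<le> i" "i \<le> s" and T1: "T = {(1,1),(1,2),(i,1),(i,2)}" for i
    proof -
      have fb: "f (1,1) < n" "f (1,2) < n" "f (i,1) < n" "f (i,2) < n" using f T1 by auto
      have t: "i - 3 < s - 2" using i by simp
      obtain C where C: "C < n^2" "Ls (i-3) (f (1,1) * n + f (1,2)) C = f (i,1) * n + f (i,2)"
        using bij_surjD[OF rowb[OF t encl[OF fb(1,2)]], of "f (i,1) * n + f (i,2)"] encl[OF fb(3,4)] by auto
      show ?thesis
        by (rule cell[OF encl[OF fb(1,2)] C(1)]) (use i C(2) fb in \<open>simp add: T1 g_def cv_def dd\<close>)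
    qed
    have c2: ?thesis if i: "3 \<le> i" "i \<le> s" and T1: "T = {(2,1),(2,2),(i,1),(i,2)}" for i
    proof -
      have fb: "f (2,1) < n" "f (2,2) < n" "f (i,1) < n" "f (i,2) < n" using f T1 by auto
      have t: "i - 3 < s - 2" using i by simp
      obtain R where R: "R < n^2" "Ls (i-3) R (f (2,1) * n + f (2,2)) = f (i,1) * n + f (i,2)"
        using bij_surjD[OF colb[OF t encl[OF fb(1,2)]], of "f (i,1) * n + f (i,2)"] encl[OF fb(3,4)] by auto
      show ?thesis
        by (rule cell[OF R(1) encl[OF fb(1,2)]]) (use i R(2) fb in \<open>simp add: T1 g_def cv_def dd\<close>)
    qed
    have c3: ?thesis if i: "3 \<le> i" "i \<le> s" and T1: "T = {(1,1),(2,1),(i,1),(i,2)}" for i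
    proof -
      have fb: "f (1,1) < n" "f (2,1) < n" "f (i,1) < n" "f (i,2) < n" using f T1 by auto
      have t: "i - 3 < s - 2" using i by simp
      obtain x y where xy: "x < n" "y < n"
        "Ls (i-3) (f (1,1) * n + x) (f (2,1) * n + y) = f (i,1) * n + f (i,2)"
        using bij_surjD[OF boxb[OF t fb(1,2)], of "f (i,1) * n + f (i,2)"] encl[OF fb(3,4)] by auto
      show ?thesis
        by (rule cell[OF encl[OF fb(1) xy(1)] encl[OF fb(2) xy(2)]])
          (use i xy fb in \<open>simp add: T1 g_def cv_def dd\<close>)
    qed
    have c4: ?thesis if i: "3 \<le> i" "i \<le> s" "3 \<le> j" "j \<le> s" "i \<noteq> j"
        and T1: "T = {(i,1),(i,2),(j,1),(j,2)}" for i j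
    proof -
      have fb: "f (i,1) < n" "f (i,2) < n" "f (j,1) < n" "f (j,2) < n" using f T1 by auto
      have t: "i - 3 < s - 2" "j - 3 < s - 2" "i - 3 \<noteq> j - 3" using i by auto
      obtain R C where RC: "R < n^2" "C < n^2" "Ls (i-3) R C = f (i,1) * n + f (i,2)"
        "Ls (j-3) R C = f (j,1) * n + f (j,2)"
        using bij_surjD[OF orth[OF t, unfolded orthogonal_def], of "(f (i,1) * n + f (i,2), f (j,1) * n + f (j,2))"]
          encl[OF fb(1,2)] encl[OF fb(3,4)] by auto
      show ?thesis
        by (rule cell[OF RC(1,2)]) (use i RC fb in \<open>simp add: T1 g_def cv_def dd\<close>)
    qed
    from cases show ?thesis
      apply (elim disjE exE conjE)
          apply (rule c0; assumption)
         apply (rule c1; assumption)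
        apply (rule c2; assumption)
       apply (rule c3; assumption)
      apply (rule c4; assumption)
      done
  qed
  have "sudoku_array s n A"
    unfolding sudoku_array_def
  proof (intro conjI allI impI)
    show "\<forall>r\<in>sa_rows s. \<forall>c<n ^ 4. A r c < n" using rng by blast
    fix T f assume T: "sudoku_top_justified s T" and fT: "\<forall>r\<in>T. f r < n"
    have fin: "finite T" using T finite_subset[of T "sa_rows s"]
      by (auto simp: sudoku_top_justified_def sa_rows_def)
    have c4: "card T = 4" using T by (simp add: sudoku_top_justified_def)
    have rT: "\<forall>r\<in>T. \<forall>c<n^4. A r c < n" using T rng by (auto simp: sudoku_top_justified_def)
    have U: "\<forall>f. (\<forall>r\<in>T. f r < n) \<longrightarrow> (\<exists>!c. c < n^4 \<and> (\<forall>r\<in>T. A r c = f r))"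
      by (rule exists_imp_unique[OF fin c4 rT]) (use exT[OF T] in blast)
    show "\<exists>!c. c < n^4 \<and> (\<forall>r\<in>T. A r c = f r)" using U fT by blast
  qed
  then show ?thesis by blast
qed

theorem theorem2p1:
  fixes n s :: nat
  assumes "n \<ge> 1" and "s \<ge> 3"
  shows "(\<exists>A. sudoku_array s n A) \<longleftrightarrow> (\<exists>Ls. mutually_orthogonal_sudokus (s - 2) n Ls)"
  using sa_imp_mos[OF assms] mos_imp_sa[OF assms] by blast

end
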